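(* Consider the multiset combinatorial auction model described in the context, where the auction's allocation is a solution of the winner determination problem (WDP) on the inferred values. (i) In an auction using only demand queries, adding demand queries can reduce efficiency: a single additional demand query can cause an efficiency drop arbitrarily close to $100\%$, i.e., for every $\delta>0$ there exist an instance, a finite set of demand-query price vectors with truthful responses for which the WDP allocation has efficiency $1$, and one additional price vector such that, after adding the (truthful) responses to that demand query, the WDP allocation has efficiency less than $\delta$. (ii) By comparison, in an auction using only value queries and assuming truthful bidding, adding additional value queries can never reduce the efficiency of the WDP allocation.
   Context: Multiset combinatorial auction: bidders $N=\{1,\dots,n\}$, items $M=\{1,\dots,m\}$ with capacities $c\in\mathbb{N}^m$. Bundles are $x\in\mathcal{X}=\{0,\dots,c_1\}\times\cdots\times\{0,\dots,c_m\}$. Each bidder $i$ has a value function $v_i:\mathcal{X}\to\mathbb{R}_{\ge0}$. Feasible allocations: $\mathcal{F}=\{a\in\mathcal{X}^n:\sum_i a_{ij}\le c_j\ \forall j\}$. Social welfare $V(a)=\sum_i v_i(a_i)$; efficiency of $a$ is $V(a)/\max_{a'\in\mathcal{F}}V(a')$. A demand query at prices $p\in\mathbb{R}^m_{\ge0}$ is answered truthfully by bidder $i$ with some $x_i^*(p)\in\arg\max_{x\in\mathcal{X}}\{v_i(x)-\langle p,x\rangle\}$; a value query for $x$ is answered with $v_i(x)$. With reports $R_i$ consisting of demand responses $R_i^{DQ}$ (pairs $(x,p)$) and value responses $R_i^{VQ}$ (pairs $(x,v_i(x))$), the inferred value is $\tilde v_i(x;R_i)=v_i(x)$ if $x$ appears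 in $R_i^{VQ}$ and otherwise $\max(\{\langle x,p\rangle:(x,p)\in R_i^{DQ}\}\cup\{0\})$. The WDP allocation is $a^*(R)\in\arg\max_{a\in\mathcal{F}}\sum_i\tilde v_i(a_i;R_i)$.
   Formalization: In (ii) the WDP maximises only over allocations giving each bidder a bundle with a reported value or the empty bundle, each $v_i$ is zero at the empty bundle, and both parts concern every WDP allocation. Apart from conventions, each condition added here is assumed in the paper as well or is needed for the statement above to hold. *)

theory Defs
  imports Complex_Main
begin

text \<open>Items are 0..<m, bidders are 0..<n.
  Price vectors are functions nat \<Rightarrow> real (only coordinates j < m matter).\<close>

definition bundles :: "nat \<Rightarrow> (nat \<Rightarrow> nat) \<Rightarrow> (nat \<Rightarrow> nat) set" where
  "bundles m c = {x. (\<forall>j<m. x j \<le> c j) \<and> (\<forall>j\<ge>m. x j = 0)}"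

definition empty_bundle :: "nat \<Rightarrow> nat" where
  "empty_bundle = (\<lambda>_. 0)"

definition feasible :: "nat \<Rightarrow> nat \<Rightarrow> (nat \<Rightarrow> nat) \<Rightarrow> (nat \<Rightarrow> nat \<Rightarrow> nat) set" where
  "feasible n m c = {a. (\<forall>i<n. a i \<in> bundles m c) \<and> (\<forall>i\<ge>n. a i = empty_bundle)
                        \<and> (\<forall>j<m. (\<Sum>i<n. a i j) \<le> c j)}"

definition welfare :: "nat \<Rightarrow> (nat \<Rightarrow> (nat \<Rightarrow> nat) \<Rightarrow> real) \<Rightarrow> (nat \<Rightarrow> nat \<Rightarrow> nat) \<Rightarrow> real" where
  "welfare n v a = (\<Sum>i<n. v i (a i))"

definition opt_welfare :: "nat \<Rightarrow> nat \<Rightarrow> (nat \<Rightarrow> nat) \<Rightarrow> (nat \<Rightarrow> (nat \<Rightarrow> nat) \<Rightarrow> real) \<Rightarrow> real" where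
  "opt_welfare n m c v = Max (welfare n v ` feasible n m c)"

definition efficiency ::
  "nat \<Rightarrow> nat \<Rightarrow> (nat \<Rightarrow> nat) \<Rightarrow> (nat \<Rightarrow> (nat \<Rightarrow> nat) \<Rightarrow> real) \<Rightarrow> (nat \<Rightarrow> nat \<Rightarrow> nat) \<Rightarrow> real" where
  "efficiency n m c v a = welfare n v a / opt_welfare n m c v"

definition valid_values :: "nat \<Rightarrow> nat \<Rightarrow> (nat \<Rightarrow> nat) \<Rightarrow> (nat \<Rightarrow> (nat \<Rightarrow> nat) \<Rightarrow> real) \<Rightarrow> bool" where
  "valid_values n m c v = (\<forall>i<n. \<forall>x\<in>bundles m c. v i x \<ge> 0)"

definition price_vec :: "nat \<Rightarrow> (nat \<Rightarrow> real) \<Rightarrow> bool" where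
  "price_vec m p = (\<forall>j<m. p j \<ge> 0)"

definition ip :: "nat \<Rightarrow> (nat \<Rightarrow> real) \<Rightarrow> (nat \<Rightarrow> nat) \<Rightarrow> real" where
  "ip m p x = (\<Sum>j<m. p j * real (x j))"

definition demand :: "nat \<Rightarrow> (nat \<Rightarrow> nat) \<Rightarrow> ((nat \<Rightarrow> nat) \<Rightarrow> real) \<Rightarrow> (nat \<Rightarrow> real) \<Rightarrow> (nat \<Rightarrow> nat) set" where
  "demand m c vi p = {x \<in> bundles m c. \<forall>y\<in>bundles m c. vi y - ip m p y \<le> vi x - ip m p x}"

text \<open>Inferred value from demand reports RD (pairs (x,p)) and value reports RV (pairs (x,v(x))).\<close>
definition inferred ::
  "nat \<Rightarrow> ((nat \<Rightarrow> nat) \<times> (nat \<Rightarrow> real)) set \<Rightarrow> ((nat \<Rightarrow> nat) \<times> real) set \<Rightarrow> (nat \<Rightarrow> nat) \<Rightarrow> real" where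
  "inferred m RD RV x =
     (if \<exists>r. (x, r) \<in> RV then (SOME r. (x, r) \<in> RV)
      else Max ({ip m p x | p. (x, p) \<in> RD} \<union> {0}))"

definition inferred_welfare ::
  "nat \<Rightarrow> nat \<Rightarrow> (nat \<Rightarrow> ((nat \<Rightarrow> nat) \<times> (nat \<Rightarrow> real)) set) \<Rightarrow> (nat \<Rightarrow> ((nat \<Rightarrow> nat) \<times> real) set)
     \<Rightarrow> (nat \<Rightarrow> nat \<Rightarrow> nat) \<Rightarrow> real" where
  "inferred_welfare n m RD RV a = (\<Sum>i<n. inferred m (RD i) (RV i) (a i))"

definition is_WDP ::
  "nat \<Rightarrow> nat \<Rightarrow> (nat \<Rightarrow> nat) \<Rightarrow> (nat \<Rightarrow> ((nat \<Rightarrow> nat) \<times> (nat \<Rightarrow> real)) set)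
     \<Rightarrow> (nat \<Rightarrow> ((nat \<Rightarrow> nat) \<times> real) set) \<Rightarrow> (nat \<Rightarrow> nat \<Rightarrow> nat) \<Rightarrow> bool" where
  "is_WDP n m c RD RV a = (a \<in> feasible n m c \<and>
     (\<forall>b\<in>feasible n m c. inferred_welfare n m RD RV b \<le> inferred_welfare n m RD RV a))"

definition vq_allowed ::
  "nat \<Rightarrow> nat \<Rightarrow> (nat \<Rightarrow> nat) \<Rightarrow> (nat \<Rightarrow> ((nat \<Rightarrow> nat) \<times> real) set) \<Rightarrow> (nat \<Rightarrow> nat \<Rightarrow> nat) set" where
  "vq_allowed n m c RV = {a \<in> feasible n m c. \<forall>i<n. a i = empty_bundle \<or> (\<exists>r. (a i, r) \<in> RV i)}"

definition is_WDP_VQ ::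
  "nat \<Rightarrow> nat \<Rightarrow> (nat \<Rightarrow> nat) \<Rightarrow> (nat \<Rightarrow> ((nat \<Rightarrow> nat) \<times> real) set) \<Rightarrow> (nat \<Rightarrow> nat \<Rightarrow> nat) \<Rightarrow> bool" where
  "is_WDP_VQ n m c RV a = (a \<in> vq_allowed n m c RV \<and>
     (\<forall>b\<in>vq_allowed n m c RV. inferred_welfare n m (\<lambda>_. {}) RV b \<le> inferred_welfare n m (\<lambda>_. {}) RV a))"

definition truthful_VQ ::
  "nat \<Rightarrow> nat \<Rightarrow> (nat \<Rightarrow> nat) \<Rightarrow> (nat \<Rightarrow> (nat \<Rightarrow> nat) \<Rightarrow> real) \<Rightarrow> (nat \<Rightarrow> ((nat \<Rightarrow> nat) \<times> real) set) \<Rightarrow> bool" where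
  "truthful_VQ n m c v RV = (\<forall>i<n. finite (RV i) \<and> (\<forall>(x, r)\<in>RV i. x \<in> bundles m c \<and> r = v i x))"

end

theory Submission
  imports Defs
begin


lemma finite_bundles: "finite (bundles m c)"
proof -
  have "bundles m c \<subseteq> {f. \<forall>x. (x \<in> {..<m} \<longrightarrow> f x \<in> {..(\<Sum>j<m. c j)}) \<and> (x \<notin> {..<m} \<longrightarrow> f x = 0)}"
  proof
    fix x assume "x \<in> bundles m c"
    then have h: "\<forall>j<m. x j \<le> c j" "\<forall>j\<ge>m. x j = 0" by (auto simp: bundles_def)
    have "\<forall>j<m. c j \<le> (\<Sum>j<m. c j)" by (auto intro: member_le_sum)
    with h show "x \<in> {f. \<forall>x. (x \<in> {..<m} \<longrightarrow> f x \<in> {..(\<Sum>j<m. c j)}) \<and> (x \<notin> {..<m} \<longrightarrow> f x = 0)}"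
      by (auto intro: le_trans)
  qed
  then show ?thesis by (rule finite_subset) (rule finite_set_of_finite_funs, auto)
qed

lemma finite_feasible: "finite (feasible n m c)"
proof -
  have "feasible n m c \<subseteq> {f. \<forall>x. (x \<in> {..<n} \<longrightarrow> f x \<in> bundles m c) \<and> (x \<notin> {..<n} \<longrightarrow> f x = empty_bundle)}"
    by (auto simp: feasible_def)
  then show ?thesis by (rule finite_subset) (rule finite_set_of_finite_funs, auto simp: finite_bundles)
qed

lemma empty_feasible: "(\<lambda>_. empty_bundle) \<in> feasible n m c"
  by (auto simp: feasible_def bundles_def empty_bundle_def)

lemma opt_ge: "b \<in> feasible n m c \<Longrightarrow> welfare n v b \<le> opt_welfare n m c v"
  unfolding opt_welfare_def by (rule Max_ge) (auto simp: finite_feasible)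

lemma opt_nonneg: "(\<forall>i<n. v i empty_bundle = 0) \<Longrightarrow> opt_welfare n m c v \<ge> 0"
  using opt_ge[OF empty_feasible, where v=v and n=n and m=m and c=c] by (simp add: welfare_def)

lemma inferred_VQ:
  assumes "truthful_VQ n m c v RV" "i < n" "v i empty_bundle = 0"
    "x = empty_bundle \<or> (\<exists>r. (x, r) \<in> RV i)"
  shows "inferred m {} (RV i) x = v i x"
proof (cases "\<exists>r. (x, r) \<in> RV i")
  case True
  then have "(x, SOME r. (x, r) \<in> RV i) \<in> RV i" by (rule someI_ex)
  with assms(1,2) have "(SOME r. (x, r) \<in> RV i) = v i x" by (auto simp: truthful_VQ_def)
  with True show ?thesis by (simp add: inferred_def)
next
  case False
  with assms(3,4) show ?thesis by (simp add: inferred_def)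
qed

lemma IW_VQ:
  assumes "truthful_VQ n m c v RV" "\<forall>i<n. v i empty_bundle = 0" "b \<in> vq_allowed n m c RV"
  shows "inferred_welfare n m (\<lambda>_. {}) RV b = welfare n v b"
  unfolding inferred_welfare_def welfare_def
  by (rule sum.cong) (use assms in \<open>auto simp: vq_allowed_def intro!: inferred_VQ\<close>)

lemma part2:
  assumes "valid_values n m c v" "\<forall>i<n. v i empty_bundle = 0"
      "truthful_VQ n m c v RV" "truthful_VQ n m c v RV'" "\<forall>i<n. RV i \<subseteq> RV' i"
      "is_WDP_VQ n m c RV a" "is_WDP_VQ n m c RV' a'"
  shows "efficiency n m c v a \<le> efficiency n m c v a'"
proof -
  have aA: "a \<in> vq_allowed n m c RV" using assms(6) by (simp add: is_WDP_VQ_def)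
  have aA': "a \<in> vq_allowed n m c RV'" using aA assms(5) unfolding vq_allowed_def by blast
  have a'A: "a' \<in> vq_allowed n m c RV'" using assms(7) by (simp add: is_WDP_VQ_def)
  have "welfare n v a = inferred_welfare n m (\<lambda>_. {}) RV' a" using IW_VQ[OF assms(4,2) aA'] by simp
  also have "\<dots> \<le> inferred_welfare n m (\<lambda>_. {}) RV' a'" using assms(7) aA' by (simp add: is_WDP_VQ_def)
  also have "\<dots> = welfare n v a'" using IW_VQ[OF assms(4,2) a'A] by simp
  finally have "welfare n v a \<le> welfare n v a'" .
  then show ?thesis unfolding efficiency_def
    by (rule divide_right_mono) (rule opt_nonneg[where m=m and c=c and n=n and v=v, OF assms(2)])
qed

definition "bA = (\<lambda>j::nat. if j = 0 then 1 else (0::nat))"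
definition "bAB = (\<lambda>j::nat. if j < 2 then 1 else (0::nat))"
definition "c1 = (\<lambda>j::nat. (1::nat))"
definition "vv e = (\<lambda>(i::nat) (x::nat\<Rightarrow>nat). if i = 0 then (if x 0 \<ge> 1 then 1 else 0)
   else if x 0 \<ge> 1 \<and> x 1 \<ge> 1 then e else (0::real))"
definition "p1 e = (\<lambda>j::nat. if j = 0 then e / 2 else (2::real))"
definition "p2 e = (\<lambda>j::nat. (e::real) / 3)"

lemma bund2: "x \<in> bundles 2 c1 \<longleftrightarrow> x 0 \<le> 1 \<and> x 1 \<le> 1 \<and> (\<forall>j\<ge>2. x j = 0)"
  by (auto simp: bundles_def c1_def less_2_cases_iff)

lemma bund_cases: "x \<in> bundles 2 c1 \<Longrightarrow> (x 0 = 0 \<or> x 0 = 1) \<and> (x 1 = 0 \<or> x 1 = 1)"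
  by (auto simp: bund2)

lemma ip2: "ip 2 p x = p 0 * real (x 0) + p 1 * real (x 1)"
  by (simp add: ip_def numeral_2_eq_2)

lemma eqA: "x \<in> bundles 2 c1 \<Longrightarrow> x = bA \<longleftrightarrow> x 0 = 1 \<and> x 1 = 0"
  apply (auto simp: bA_def bund2)
  by (metis One_nat_def less_2_cases not_le)

lemma eqAB: "x \<in> bundles 2 c1 \<Longrightarrow> x = bAB \<longleftrightarrow> x 0 = 1 \<and> x 1 = 1"
  apply (auto simp: bAB_def bund2)
  by (metis One_nat_def less_2_cases not_le)

lemma bundles_simps: "bA \<in> bundles 2 c1" "bAB \<in> bundles 2 c1" "empty_bundle \<in> bundles 2 c1"
  by (auto simp: bund2 bA_def bAB_def empty_bundle_def)

lemma vals: "vv e 0 bA = 1" "vv e 1 bA = 0" "vv e 0 bAB = 1" "vv e 1 bAB = e"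
   "vv e 0 empty_bundle = 0" "vv e 1 empty_bundle = 0"
  by (auto simp: vv_def bA_def bAB_def empty_bundle_def)

lemma ips: "ip 2 q bA = q 0" "ip 2 q bAB = q 0 + q 1" "ip 2 q empty_bundle = 0"
  by (auto simp: ip2 bA_def bAB_def empty_bundle_def)

lemma all_less2: "(\<forall>i<(2::nat). P i) \<longleftrightarrow> P 0 \<and> P 1"
  by (auto simp: less_2_cases_iff)

lemma sum_less2: "(\<Sum>i<(2::nat). f i) = f 0 + f 1"
  by (simp add: numeral_2_eq_2)

lemma feas2: "a \<in> feasible 2 2 c1 \<longleftrightarrow> a 0 \<in> bundles 2 c1 \<and> a 1 \<in> bundles 2 c1 \<and> (\<forall>i\<ge>2. a i = empty_bundle)
   \<and> a 0 0 + a 1 0 \<le> 1 \<and> a 0 1 + a 1 1 \<le> 1"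
  unfolding feasible_def all_less2 sum_less2 by (auto simp: c1_def)

lemma welf2: "welfare 2 v a = v 0 (a 0) + v 1 (a 1)"
  by (simp add: welfare_def numeral_2_eq_2)

lemma IW2: "inferred_welfare 2 m RD RV a = inferred m (RD 0) (RV 0) (a 0) + inferred m (RD 1) (RV 1) (a 1)"
  by (simp add: inferred_welfare_def numeral_2_eq_2)

lemma opt1: assumes "0 < e" "e < 1" shows "opt_welfare 2 2 c1 (vv e) = 1"
  unfolding opt_welfare_def
proof (rule Max_eqI)
  show "finite (welfare 2 (vv e) ` feasible 2 2 c1)" by (simp add: finite_feasible)
next
  fix y assume "y \<in> welfare 2 (vv e) ` feasible 2 2 c1"
  then obtain a where a: "a \<in> feasible 2 2 c1" and y: "y = welfare 2 (vv e) a" by auto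
  show "y \<le> 1" using a assms unfolding y welf2 feas2 by (auto simp: vv_def)
next
  let ?a = "\<lambda>i::nat. if i = 0 then bA else empty_bundle"
  have "?a \<in> feasible 2 2 c1" by (simp add: feas2 bundles_simps) (simp add: bA_def empty_bundle_def)
  moreover have "welfare 2 (vv e) ?a = 1" by (simp add: welf2 vv_def bA_def empty_bundle_def)
  ultimately show "1 \<in> welfare 2 (vv e) ` feasible 2 2 c1" by force
qed

lemma d1: assumes "0<e" "e<1" shows "bA \<in> demand 2 c1 (vv e 0) (p1 e)"
  unfolding demand_def
proof (intro CollectI conjI ballI bundles_simps)
  fix y assume "y \<in> bundles 2 c1"
  then have "(y 0 = 0 \<or> y 0 = 1) \<and> (y 1 = 0 \<or> y 1 = 1)" by (rule bund_cases)
  then show "vv e 0 y - ip 2 (p1 e) y \<le> vv e 0 bA - ip 2 (p1 e) bA"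
    using assms by (elim conjE disjE) (auto simp: ip2 vv_def p1_def p2_def bA_def bAB_def empty_bundle_def)
qed

lemma d2: assumes "0<e" "e<1" shows "empty_bundle \<in> demand 2 c1 (vv e 1) (p1 e)"
  unfolding demand_def
proof (intro CollectI conjI ballI bundles_simps)
  fix y assume "y \<in> bundles 2 c1"
  then have "(y 0 = 0 \<or> y 0 = 1) \<and> (y 1 = 0 \<or> y 1 = 1)" by (rule bund_cases)
  then show "vv e 1 y - ip 2 (p1 e) y \<le> vv e 1 empty_bundle - ip 2 (p1 e) empty_bundle"
    using assms by (elim conjE disjE) (auto simp: ip2 vv_def p1_def p2_def bA_def bAB_def empty_bundle_def)
qed

lemma d3: assumes "0<e" "e<1" shows "bA \<in> demand 2 c1 (vv e 0) (p2 e)"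
  unfolding demand_def
proof (intro CollectI conjI ballI bundles_simps)
  fix y assume "y \<in> bundles 2 c1"
  then have "(y 0 = 0 \<or> y 0 = 1) \<and> (y 1 = 0 \<or> y 1 = 1)" by (rule bund_cases)
  then show "vv e 0 y - ip 2 (p2 e) y \<le> vv e 0 bA - ip 2 (p2 e) bA"
    using assms by (elim conjE disjE) (auto simp: ip2 vv_def p1_def p2_def bA_def bAB_def empty_bundle_def)
qed

lemma d4: assumes "0<e" "e<1" shows "bAB \<in> demand 2 c1 (vv e 1) (p2 e)"
  unfolding demand_def
proof (intro CollectI conjI ballI bundles_simps)
  fix y assume "y \<in> bundles 2 c1"
  then have "(y 0 = 0 \<or> y 0 = 1) \<and> (y 1 = 0 \<or> y 1 = 1)" by (rule bund_cases)
  then show "vv e 1 y - ip 2 (p2 e) y \<le> vv e 1 bAB - ip 2 (p2 e) bAB"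
    using assms by (elim conjE disjE) (auto simp: ip2 vv_def p1_def p2_def bA_def bAB_def empty_bundle_def)
qed

lemma setA: "{ip m p x | p. (x,p) \<in> {(y,q)}} = (if x = y then {ip m q x} else {})" by auto
lemma setB: "{ip m p x | p. (x,p) \<in> {(y,q),(z,r)}} = (if x = y then {ip m q x} else {}) \<union> (if x = z then {ip m r x} else {})" by auto
lemma noRV: "inferred m RD {} x = Max ({ip m p x | p. (x,p) \<in> RD} \<union> {0})" by (simp add: inferred_def)

lemma inf1: assumes "0<e" shows "inferred 2 {(bA, p1 e)} {} x = (if x = bA then e/2 else 0)"
  unfolding noRV setA using assms by (auto simp: ips p1_def)

lemma inf2: shows "inferred 2 {(empty_bundle, p1 e)} {} x = 0"
  unfolding noRV setA by (auto simp: ips)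

lemma inf3: assumes "0<e" shows "inferred 2 {(bA, p1 e), (bA, p2 e)} {} x = (if x = bA then e/2 else 0)"
  unfolding noRV setB using assms by (auto simp: ips p1_def p2_def)

lemma bAB_ne: "empty_bundle \<noteq> bAB"
  by (metis bAB_def empty_bundle_def pos2 zero_neq_one)

lemma inf4: assumes "0<e" shows "inferred 2 {(empty_bundle, p1 e), (bAB, p2 e)} {} x = (if x = bAB then 2*e/3 else 0)"
  unfolding noRV setB using assms bAB_ne by (auto simp: ips p1_def p2_def)

lemma part1:
  fixes \<delta> :: real assumes "\<delta> > 0"
  shows "\<exists>n m c v (P :: (nat \<Rightarrow> real) set) resp p' resp'.
         valid_values n m c v \<and> finite P \<and> (\<forall>p\<in>P. price_vec m p) \<and> price_vec m p' \<and>
         (\<forall>i<n. \<forall>p\<in>P. resp i p \<in> demand m c (v i) p) \<and>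
         (\<forall>i<n. resp' i \<in> demand m c (v i) p') \<and>
         (\<forall>a. is_WDP n m c (\<lambda>i. {(resp i p, p) | p. p \<in> P}) (\<lambda>_. {}) a
                \<longrightarrow> efficiency n m c v a = 1) \<and>
         (\<forall>a. is_WDP n m c (\<lambda>i. {(resp i p, p) | p. p \<in> P} \<union> {(resp' i, p')}) (\<lambda>_. {}) a
                \<longrightarrow> efficiency n m c v a < \<delta>)"
proof -
  define e where "e = min (\<delta>/2) (1/2)"
  have e0: "0 < e" and e1: "e < 1" and ed: "e < \<delta>" using assms by (auto simp: e_def)
  let ?resp = "\<lambda>(i::nat) (p::nat\<Rightarrow>real). if i = 0 then bA else empty_bundle"
  let ?resp' = "\<lambda>i::nat. if i = 0 then bA else bAB"
  have RD1: "(\<lambda>i. {(?resp i p, p) | p. p \<in> {p1 e}}) = (\<lambda>i. {(if i = 0 then bA else empty_bundle, p1 e)})"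
    by auto
  have RD2: "(\<lambda>i. {(?resp i p, p) | p. p \<in> {p1 e}} \<union> {(?resp' i, p2 e)})
     = (\<lambda>i. if i = 0 then {(bA, p1 e), (bA, p2 e)} else {(empty_bundle, p1 e), (bAB, p2 e)})"
    by (rule ext) auto
  have opt: "opt_welfare 2 2 c1 (vv e) = 1" using opt1 e0 e1 by simp
  have W1: "efficiency 2 2 c1 (vv e) a = 1" if wdp: "is_WDP 2 2 c1 (\<lambda>i. {(?resp i p, p) | p. p \<in> {p1 e}}) (\<lambda>_. {}) a" for a
  proof -
    let ?b = "\<lambda>i::nat. if i = 0 then bA else empty_bundle"
    have bf: "?b \<in> feasible 2 2 c1" by (simp add: feas2 bundles_simps) (simp add: bA_def empty_bundle_def)
    have af: "a \<in> feasible 2 2 c1" using wdp by (simp add: is_WDP_def)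
    have "inferred_welfare 2 2 (\<lambda>i. {(if i = 0 then bA else empty_bundle, p1 e)}) (\<lambda>_. {}) ?b
       \<le> inferred_welfare 2 2 (\<lambda>i. {(if i = 0 then bA else empty_bundle, p1 e)}) (\<lambda>_. {}) a"
      using wdp bf unfolding RD1 is_WDP_def by blast
    then have "a 0 = bA" using e0 by (auto simp: IW2 inf1 inf2 split: if_splits)
    then have a00: "a 0 0 = 1" "a 0 1 = 0" by (auto simp: bA_def)
    with af have "a 1 0 = 0" by (simp add: feas2)
    then have "welfare 2 (vv e) a = 1" using a00 by (simp add: welf2 vv_def)
    then show ?thesis by (simp add: efficiency_def opt)
  qed
  have W2: "efficiency 2 2 c1 (vv e) a < \<delta>" if wdp: "is_WDP 2 2 c1 (\<lambda>i. {(?resp i p, p) | p. p \<in> {p1 e}} \<union> {(?resp' i, p2 e)}) (\<lambda>_. {}) a" for a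
  proof -
    let ?b = "\<lambda>i::nat. if i = 1 then bAB else empty_bundle"
    have bf: "?b \<in> feasible 2 2 c1" by (simp add: feas2 bundles_simps) (simp add: bAB_def empty_bundle_def)
    have af: "a \<in> feasible 2 2 c1" using wdp by (simp add: is_WDP_def)
    have "inferred_welfare 2 2 (\<lambda>i. if i = 0 then {(bA, p1 e), (bA, p2 e)} else {(empty_bundle, p1 e), (bAB, p2 e)}) (\<lambda>_. {}) ?b
       \<le> inferred_welfare 2 2 (\<lambda>i. if i = 0 then {(bA, p1 e), (bA, p2 e)} else {(empty_bundle, p1 e), (bAB, p2 e)}) (\<lambda>_. {}) a"
      using wdp bf unfolding RD2 is_WDP_def by blast
    then have "a 1 = bAB" using e0 bAB_ne by (auto simp: IW2 inf3 inf4 split: if_splits)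
    then have a00: "a 1 0 = 1" "a 1 1 = 1" by (auto simp: bAB_def)
    with af have "a 0 0 = 0" by (simp add: feas2)
    then have "welfare 2 (vv e) a = e" using a00 by (simp add: welf2 vv_def)
    then show ?thesis using ed by (simp add: efficiency_def opt)
  qed
  show ?thesis
    apply (rule exI[where x=2], rule exI[where x=2], rule exI[where x=c1], rule exI[where x="vv e"],
       rule exI[where x="{p1 e}"], rule exI[where x="?resp"], rule exI[where x="p2 e"], rule exI[where x="?resp'"])
    apply (intro conjI)
    using e0 e1 W1 W2 d1 d2 d3 d4
    by (auto simp: valid_values_def vv_def price_vec_def p1_def p2_def all_less2)
qed


theorem proposition3p3:
  shows
  "(\<forall>\<delta>::real. \<delta> > 0 \<longrightarrow>
      (\<exists>n m c v (P :: (nat \<Rightarrow> real) set) resp p' resp'.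
         valid_values n m c v \<and> finite P \<and> (\<forall>p\<in>P. price_vec m p) \<and> price_vec m p' \<and>
         (\<forall>i<n. \<forall>p\<in>P. resp i p \<in> demand m c (v i) p) \<and>
         (\<forall>i<n. resp' i \<in> demand m c (v i) p') \<and>
         (\<forall>a. is_WDP n m c (\<lambda>i. {(resp i p, p) | p. p \<in> P}) (\<lambda>_. {}) a
                \<longrightarrow> efficiency n m c v a = 1) \<and>
         (\<forall>a. is_WDP n m c (\<lambda>i. {(resp i p, p) | p. p \<in> P} \<union> {(resp' i, p')}) (\<lambda>_. {}) a
                \<longrightarrow> efficiency n m c v a < \<delta>)))
   \<and>
   (\<forall>n m c v RV RV' a a'.
      valid_values n m c v \<and> (\<forall>i<n. v i empty_bundle = 0) \<and>
      truthful_VQ n m c v RV \<and> truthful_VQ n m c v RV' \<and> (\<forall>i<n. RV i \<subseteq> RV' i) \<and>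
      is_WDP_VQ n m c RV a \<and> is_WDP_VQ n m c RV' a'
      \<longrightarrow> efficiency n m c v a \<le> efficiency n m c v a')"
    using part1 part2 by blast

end
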